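(* Let $G$ be a finite simple graph. Then the total number of (nonempty) cliques of $G$ satisfies \[ \sum_{t\ge 1}N(G,K_t)\;\le\;\sum_{v\in V(G)}\sum_{t=1}^{d(v)+1}\frac{\binom{d(v)+1}{t}}{d(v)+1}\;=\;\sum_{v\in V(G)}\frac{2^{d(v)+1}-1}{d(v)+1}. \]
   Context: $N(G,K_t)$ denotes the number of subgraphs of $G$ isomorphic to the complete graph $K_t$. $d(v)$ is the degree of $v$ in $G$. *)

theory Defs
  imports Complex_Main
begin

definition simple_graph :: "'a set \<Rightarrow> 'a set set \<Rightarrow> bool" where
  "simple_graph V E \<longleftrightarrow> finite V \<and> (\<forall>e\<in>E. e \<subseteq> V \<and> card e = 2)"

definition is_clique :: "'a set \<Rightarrow> 'a set set \<Rightarrow> 'a set \<Rightarrow> bool" where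
  "is_clique V E S \<longleftrightarrow> S \<subseteq> V \<and> (\<forall>u\<in>S. \<forall>w\<in>S. u \<noteq> w \<longrightarrow> {u, w} \<in> E)"

definition num_Kt :: "'a set \<Rightarrow> 'a set set \<Rightarrow> nat \<Rightarrow> nat" where
  "num_Kt V E t = card {S. is_clique V E S \<and> card S = t}"

definition degree :: "'a set \<Rightarrow> 'a set set \<Rightarrow> 'a \<Rightarrow> nat" where
  "degree V E v = card {u\<in>V. {v, u} \<in> E}"

end

theory Submission
  imports Defs
begin

lemma pow_sum_eq:
  fixes N :: "'a set"
  assumes "finite N"
  shows "(\<Sum>T\<in>Pow N. 1 / real (card T + 1))
         = (\<Sum>t=1..card N + 1. real (card N + 1 choose t) / real (card N + 1))"
proof -
  have "(\<Sum>T\<in>Pow N. 1 / real (card T + 1))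
      = (\<Sum>k\<in>{0..card N}. \<Sum>T\<in>{T\<in>Pow N. card T = k}. 1 / real (card T + 1))"
    by (rule sum.group[symmetric]) (use assms card_mono in auto)
  also have "\<dots> = (\<Sum>k\<in>{0..card N}. real (card N choose k) / real (k + 1))"
  proof (rule sum.cong[OF refl])
    fix k assume "k \<in> {0..card N}"
    have "(\<Sum>T\<in>{T\<in>Pow N. card T = k}. 1 / real (card T + 1))
        = (\<Sum>T\<in>{T\<in>Pow N. card T = k}. 1 / real (k + 1))" by simp
    also have "\<dots> = real (card {T. T \<subseteq> N \<and> card T = k}) / real (k+1)"
      by simp
    also have "\<dots> = real (card N choose k) / real (k + 1)"
      using n_subsets[OF assms] by simp
    finally show "(\<Sum>T\<in>{T\<in>Pow N. card T = k}. 1 / real (card T + 1)) = real (card N choose k) / real (k + 1)" .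
  qed
  also have "\<dots> = (\<Sum>k\<in>{0..card N}. real (card N + 1 choose (k+1)) / real (card N + 1))"
  proof (rule sum.cong[OF refl])
    fix k
    have "real (Suc k) * real (Suc (card N) choose Suc k) = real (Suc (card N)) * real (card N choose k)"
      using Suc_times_binomial[of k "card N"] by (metis of_nat_mult)
    then show "real (card N choose k) / real (k + 1) = real (card N + 1 choose (k+1)) / real (card N + 1)"
      by (simp add: field_simps)
  qed
  also have "\<dots> = (\<Sum>t=1..card N + 1. real (card N + 1 choose t) / real (card N + 1))"
    using sum.shift_bounds_cl_Suc_ivl[of "\<lambda>t. real (card N + 1 choose t) / real (card N + 1)" 0 "card N"]
    by simp
  finally show ?thesis .
qed

lemma binom_part:
  "(\<Sum>t=1..n. real (n choose t)) = 2 ^ n - 1"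
proof -
  have "(\<Sum>t\<le>n. real (n choose t)) = 2 ^ n"
  proof -
    have "real (\<Sum>t\<le>n. n choose t) = 2 ^ n" by (simp only: choose_row_sum) simp
    then show ?thesis by simp
  qed
  moreover have "(\<Sum>t\<le>n. real (n choose t)) = 1 + (\<Sum>t=1..n. real (n choose t))"
  proof -
    have "{..n} = insert 0 {1..n}" by auto
    then show ?thesis by simp
  qed
  ultimately show ?thesis by simp
qed

theorem mainTheorem2:
  fixes V :: "'a set" and E :: "'a set set"
  assumes "simple_graph V E"
  shows "real (\<Sum>t\<in>{1..card V}. num_Kt V E t)
           \<le> (\<Sum>v\<in>V. \<Sum>t=1..degree V E v + 1.
                 real (degree V E v + 1 choose t) / real (degree V E v + 1))
       \<and> (\<Sum>v\<in>V. \<Sum>t=1..degree V E v + 1.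
                 real (degree V E v + 1 choose t) / real (degree V E v + 1))
         = (\<Sum>v\<in>V. (2 ^ (degree V E v + 1) - 1) / real (degree V E v + 1))"
proof
  have fV: "finite V" and EV: "\<And>e. e \<in> E \<Longrightarrow> e \<subseteq> V \<and> card e = 2"
    using assms unfolding simple_graph_def by auto
  define C where "C = {S. is_clique V E S \<and> S \<noteq> {}}"
  have CP: "C \<subseteq> Pow V" unfolding C_def is_clique_def by auto
  have fC: "finite C" by (rule finite_subset[OF CP]) (simp add: fV)
  have Cfin: "\<And>S. S \<in> C \<Longrightarrow> finite S" using CP fV finite_subset by blast
  have "(\<Sum>t\<in>{1..card V}. num_Kt V E t) = card (\<Union>t\<in>{1..card V}. {S. is_clique V E S \<and> card S = t})"
    unfolding num_Kt_def
  proof (rule card_UN_disjoint[symmetric])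
    show "finite {1..card V}" by simp
    show "\<forall>i\<in>{1..card V}. finite {S. is_clique V E S \<and> card S = i}"
      using fV by (auto intro: rev_finite_subset[of "Pow V"] simp: is_clique_def)
    show "\<forall>i\<in>{1..card V}. \<forall>j\<in>{1..card V}. i \<noteq> j \<longrightarrow>
      {S. is_clique V E S \<and> card S = i} \<inter> {S. is_clique V E S \<and> card S = j} = {}" by auto
  qed
  also have "(\<Union>t\<in>{1..card V}. {S. is_clique V E S \<and> card S = t}) = C"
  proof -
    have "\<And>S. is_clique V E S \<Longrightarrow> card S \<le> card V"
      using fV by (auto simp: is_clique_def intro: card_mono)
    moreover have "\<And>S. is_clique V E S \<Longrightarrow> S \<noteq> {} \<longleftrightarrow> card S \<ge> 1"
      using fV by (auto simp: is_clique_def card_gt_0_iff[symmetric] Suc_le_eq dest: finite_subset)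
    ultimately show ?thesis unfolding C_def by fastforce
  qed
  finally have L: "real (\<Sum>t\<in>{1..card V}. num_Kt V E t) = real (card C)" by simp
  also have "\<dots> = (\<Sum>S\<in>C. \<Sum>v\<in>S. 1 / real (card S))"
  proof -
    have "\<And>S. S \<in> C \<Longrightarrow> (\<Sum>v\<in>S. 1 / real (card S)) = 1"
      using Cfin unfolding C_def by auto
    then show ?thesis by simp
  qed
  also have "\<dots> = (\<Sum>S\<in>C. \<Sum>v\<in>{v\<in>V. v \<in> S}. 1 / real (card S))"
    using CP by (intro sum.cong) auto
  also have "\<dots> = (\<Sum>v\<in>V. \<Sum>S\<in>{S\<in>C. v \<in> S}. 1 / real (card S))"
    by (rule sum.swap_restrict[OF fC fV])
  also have "\<dots> \<le> (\<Sum>v\<in>V. \<Sum>t=1..degree V E v + 1.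
                 real (degree V E v + 1 choose t) / real (degree V E v + 1))"
  proof (rule sum_mono)
    fix v assume vV: "v \<in> V"
    define N where "N = {u\<in>V. {v, u} \<in> E}"
    have fN: "finite N" using fV unfolding N_def by auto
    have vN: "v \<notin> N" using EV unfolding N_def by fastforce
    have inj: "inj_on (\<lambda>S. S - {v}) {S\<in>C. v \<in> S}"
      by (rule inj_onI) blast
    have img: "(\<lambda>S. S - {v}) ` {S\<in>C. v \<in> S} \<subseteq> Pow N"
      unfolding C_def N_def is_clique_def by auto
    have "(\<Sum>S\<in>{S\<in>C. v \<in> S}. 1 / real (card S))
        = (\<Sum>S\<in>{S\<in>C. v \<in> S}. 1 / real (card (S - {v}) + 1))"
    proof (rule sum.cong[OF refl])
      fix S assume "S \<in> {S\<in>C. v \<in> S}"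
      then have "finite S" "v \<in> S" using Cfin by auto
      then have "card S = card (S - {v}) + 1"
        by (metis Suc_eq_plus1 card_Suc_Diff1)
      then show "1 / real (card S) = 1 / real (card (S - {v}) + 1)" by simp
    qed
    also have "\<dots> = (\<Sum>T\<in>(\<lambda>S. S - {v}) ` {S\<in>C. v \<in> S}. 1 / real (card T + 1))"
      using sum.reindex[OF inj, of "\<lambda>T. 1 / real (card T + 1)"] by simp
    also have "\<dots> \<le> (\<Sum>T\<in>Pow N. 1 / real (card T + 1))"
      by (rule sum_mono2) (use fN img in auto)
    also have "\<dots> = (\<Sum>t=1..card N + 1. real (card N + 1 choose t) / real (card N + 1))"
      by (rule pow_sum_eq[OF fN])
    also have "card N = degree V E v" unfolding N_def degree_def by simp
    finally show "(\<Sum>S\<in>{S\<in>C. v \<in> S}. 1 / real (card S)) \<le> (\<Sum>t=1..degree V E v + 1.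
                 real (degree V E v + 1 choose t) / real (degree V E v + 1))" .
  qed
  finally show "real (\<Sum>t\<in>{1..card V}. num_Kt V E t)
           \<le> (\<Sum>v\<in>V. \<Sum>t=1..degree V E v + 1.
                 real (degree V E v + 1 choose t) / real (degree V E v + 1))" .
next
  show "(\<Sum>v\<in>V. \<Sum>t=1..degree V E v + 1.
                 real (degree V E v + 1 choose t) / real (degree V E v + 1))
         = (\<Sum>v\<in>V. (2 ^ (degree V E v + 1) - 1) / real (degree V E v + 1))"
  proof (rule sum.cong[OF refl])
    fix v
    show "(\<Sum>t=1..degree V E v + 1.
                 real (degree V E v + 1 choose t) / real (degree V E v + 1))
         = (2 ^ (degree V E v + 1) - 1) / real (degree V E v + 1)"
      using binom_part[of "degree V E v + 1"] by (simp add: sum_divide_distrib[symmetric])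
  qed
qed

end
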